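(* Let $k\ge 1$ be an integer, let $C(k)=\prod_{p\le 2k,\ p\text{ prime}}p$, and let $a\in\mathbb{C}$ with $a\neq 0$. Define $$Z_a^k=\Big\{(\zeta_1,\dots,\zeta_k)\ :\ \zeta_i \text{ roots of unity, and } \exists\, a_1,\dots,a_k\in\mathbb{Q} \text{ with } \sum_{i=1}^k a_i\zeta_i=a \text{ and } \sum_{i\in I}a_i\zeta_i\neq 0 \text{ for all } \emptyset\neq I\subseteq[k]\Big\}.$$ Then $|Z_a^k|\le (k\cdot C(k))^k$.
   Context: $[k]=\{1,\dots,k\}$. *)

theory Defs
  imports Complex_Main "HOL-Computational_Algebra.Primes"
begin

definition root_of_unity :: "complex \<Rightarrow> bool" where
  "root_of_unity z \<longleftrightarrow> (\<exists>n::nat. n > 0 \<and> z ^ n = 1)"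

definition primorial_2k :: "nat \<Rightarrow> nat" where
  "primorial_2k k = (\<Prod>p\<in>{p. prime p \<and> p \<le> 2 * k}. p)"

text \<open>Tuples (zeta_1,...,zeta_k) are represented as lists of length k,
  with zeta_(i+1) = zs ! i for i < k.\<close>
definition Z_set :: "complex \<Rightarrow> nat \<Rightarrow> complex list set" where
  "Z_set a k = {zs. length zs = k \<and> (\<forall>i<k. root_of_unity (zs ! i)) \<and>
     (\<exists>c :: nat \<Rightarrow> complex. (\<forall>i<k. c i \<in> \<rat>) \<and>
        (\<Sum>i<k. c i * zs ! i) = a \<and>
        (\<forall>I. I \<subseteq> {..<k} \<and> I \<noteq> {} \<longrightarrow> (\<Sum>i\<in>I. c i * zs ! i) \<noteq> 0))}"

end

theory Submission
  imports Defs "HOL-Computational_Algebra.Polynomial" "HOL-Computational_Algebra.Primes"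
begin
abbreviation ci :: "int poly \<Rightarrow> complex poly" where "ci p \<equiv> map_poly of_int p"

lemma ci_pCons [simp]: "ci (pCons a p) = pCons (of_int a) (ci p)"
  by (simp add: map_poly_pCons)

lemma ci_add [simp]: "ci (p + q) = ci p + ci q"
  by (induction p arbitrary: q; case_tac q; simp)

lemma ci_minus [simp]: "ci (- p) = - ci p"
  by (induction p) simp_all

lemma ci_diff [simp]: "ci (p - q) = ci p - ci q"
  using ci_add[of p "-q"] by simp

lemma ci_smult [simp]: "ci (smult c p) = smult (of_int c) (ci p)"
  by (induction p) simp_all

lemma ci_mult [simp]: "ci (p * q) = ci p * ci q"
  by (induction p) (simp_all add: mult_pCons_left)

lemma ci_1 [simp]: "ci 1 = 1" by simp

lemma ci_const [simp]: "ci [:a:] = [:of_int a:]" by simp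

lemma ci_power [simp]: "ci (p ^ n) = ci p ^ n"
  by (induction n) simp_all

lemma ci_monom [simp]: "ci (monom c n) = monom (of_int c) n"
  by (simp add: map_poly_monom)

lemma ci_pcompose [simp]: "ci (pcompose p q) = pcompose (ci p) (ci q)"
  by (induction p) (simp_all add: pcompose_pCons)

lemma ci_pderiv [simp]: "ci (pderiv p) = pderiv (ci p)"
  by (induction p) (simp_all add: pderiv_pCons)

lemma ci_sum [simp]: "ci (sum f A) = (\<Sum>x\<in>A. ci (f x))"
  by (induction A rule: infinite_finite_induct) simp_all

lemma ci_eq_0 [simp]: "ci p = 0 \<longleftrightarrow> p = 0"
  by (simp add: map_poly_eq_0_iff)

lemma degree_ci [simp]: "degree (ci p) = degree p"
  by (simp add: degree_map_poly)

definition qd :: "nat \<Rightarrow> 'a::comm_ring_1 \<Rightarrow> bool" where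
  "qd q x \<longleftrightarrow> (\<exists>r. x = of_nat q * r)"

lemma qd_0 [simp]: "qd q 0" unfolding qd_def by (rule exI[of _ 0]) simp

lemma qd_add: "qd q x \<Longrightarrow> qd q y \<Longrightarrow> qd q (x + y)"
  unfolding qd_def by (metis distrib_left)

lemma qd_minus: "qd q x \<Longrightarrow> qd q (- x)"
  unfolding qd_def by (metis mult_minus_right)

lemma qd_diff: "qd q x \<Longrightarrow> qd q y \<Longrightarrow> qd q (x - y)"
  using qd_add[of q x "-y"] qd_minus[of q y] by simp

lemma qd_mult: "qd q x \<Longrightarrow> qd q (y * x)"
  unfolding qd_def by (metis mult.left_commute)

lemma qd_mult2: "qd q x \<Longrightarrow> qd q (x * y)"
  using qd_mult[of q x y] by (simp add: mult.commute)

lemma qd_sum: "(\<And>x. x \<in> A \<Longrightarrow> qd q (f x)) \<Longrightarrow> qd q (sum f A)"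
  by (induction A rule: infinite_finite_induct) (auto intro: qd_add)

lemma qd_of_nat: "q dvd n \<Longrightarrow> qd q (of_nat n)"
  unfolding qd_def by (auto elim!: dvdE)

lemma qd_self: "qd q (of_nat q)"
  unfolding qd_def by (rule exI[of _ 1]) simp

lemma frob_add:
  fixes a b :: "'a::comm_ring_1"
  assumes q: "prime q" shows "qd q ((a+b)^q - a^q - b^q)"
proof -
  have q0: "q > 0" using q prime_gt_0_nat by blast
  have "(a+b)^q = (\<Sum>k\<in>{..q}. of_nat (q choose k) * a^k * b^(q-k))" by (rule binomial_ring)
  also have "{..q} = insert q (insert 0 {1..<q})" using q0 by auto
  also have "(\<Sum>k\<in>insert q (insert 0 {1..<q}). of_nat (q choose k) * a^k * b^(q-k)) =
     a^q + (b^q + (\<Sum>k\<in>{1..<q}. of_nat (q choose k) * a^k * b^(q-k)))"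
    using q0 by (subst sum.insert; auto)+
  finally have "(a+b)^q - a^q - b^q = (\<Sum>k\<in>{1..<q}. of_nat (q choose k) * a^k * b^(q-k))"
    by simp
  also have "qd q \<dots>"
  proof (rule qd_sum)
    fix k assume "k \<in> {1..<q}"
    then have "q dvd (q choose k)" using q by (intro dvd_choose_prime) auto
    then show "qd q (of_nat (q choose k) * a ^ k * b ^ (q - k))"
      by (intro qd_mult2 qd_of_nat)
  qed
  finally show ?thesis .
qed

lemma fermat_nat_gen:
  assumes q: "prime q" shows "qd q ((of_nat n :: 'a::comm_ring_1)^q - of_nat n)"
proof (induction n)
  case 0 then show ?case using q by (simp add: prime_gt_0_nat power_0_left)
next
  case (Suc n)
  have "(of_nat (Suc n) :: 'a)^q - of_nat (Suc n) =
     ((of_nat n + 1)^q - (of_nat n)^q - 1^q) + ((of_nat n)^q - of_nat n)" by (simp add: add.commute)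
  then show ?case using frob_add[OF q, of "of_nat n :: 'a" 1] Suc by (metis qd_add add.commute)
qed

lemma qd_int: "qd q (a::int) \<longleftrightarrow> int q dvd a"
  unfolding qd_def by (auto simp: dvd_def)

lemma fermat_int:
  assumes q: "prime q" shows "int q dvd (a::int)^q - a"
proof -
  have q0: "q > 0" using q prime_gt_0_nat by blast
  define c where "c = a mod int q"
  define d where "d = int q * (a div int q)"
  have a: "a = c + d" unfolding c_def d_def by simp
  have c: "c = int (nat c)" unfolding c_def using q0 by simp
  have 1: "qd q (c^q - c)" using fermat_nat_gen[OF q, of "nat c", where 'a=int] c by simp
  have 2: "qd q d" unfolding d_def qd_def by auto
  have 3: "qd q (d^q)" using 2 q0 by (metis qd_mult2 power_eq_if not_gr0 mult.commute)
  have "a^q - a = ((c+d)^q - c^q - d^q) + (c^q - c) + (d^q - d)" using a by simp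
  moreover have "qd q \<dots>" by (intro qd_add qd_diff frob_add q 1 2 3)
  ultimately show ?thesis by (simp add: qd_int)
qed

lemma pCons_as_x: "pCons a h = [:a:] + monom 1 1 * (h :: int poly)"
proof -
  have "monom 1 1 * h = pCons 0 h"
    by (simp add: monom_Suc monom_0)
  then show ?thesis by simp
qed

lemma frob_poly:
  fixes f :: "int poly"
  assumes q: "prime q" shows "qd q (f^q - pcompose f (monom 1 q))"
proof (induction f)
  case 0 then show ?case using q by (simp add: prime_gt_0_nat power_0_left)
next
  case (pCons a h)
  define X :: "int poly" where "X = monom 1 q"
  have q0: "q > 0" using q prime_gt_0_nat by blast
  have e1: "(monom 1 1 * h)^q = X * h^q" unfolding X_def by (simp add: power_mult_distrib monom_power)
  define Y where "Y = monom 1 1 * h"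
  have fe: "pCons a h = [:a:] + Y" unfolding Y_def by (rule pCons_as_x)
  have "pCons a h ^ q - pcompose (pCons a h) X = ([:a:] + Y)^q - ([:a:] + X * pcompose h X)"
    by (simp only: pcompose_pCons fe[symmetric])
  also have "\<dots> = (([:a:] + monom 1 1 * h)^q - [:a:]^q - (monom 1 1 * h)^q) + ([:a:]^q - [:a:]) +
      X * (h^q - pcompose h X)"
    unfolding Y_def e1 by (simp add: algebra_simps)
  finally have "pCons a h ^ q - pcompose (pCons a h) X =
     (([:a:] + monom 1 1 * h)^q - [:a:]^q - (monom 1 1 * h)^q) + ([:a:]^q - [:a:]) +
      X * (h^q - pcompose h X)" .
  moreover have "qd q ([:a:]^q - [:a:] :: int poly)"
  proof -
    obtain r where r: "a^q - a = int q * r" using fermat_int[OF q, of a] by (auto elim: dvdE)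
    have "[:a:]^q - [:a:] = [:a^q - a:]" by (simp add: poly_const_pow)
    also have "\<dots> = of_nat q * [:r:]" using r by (simp add: of_nat_poly)
    finally show ?thesis unfolding qd_def by blast
  qed
  ultimately show ?case using pCons.IH unfolding X_def[symmetric]
    by (metis qd_add qd_mult frob_add[OF q])
qed

definition prim :: "nat \<Rightarrow> complex \<Rightarrow> bool" where
  "prim m z \<longleftrightarrow> 0 < m \<and> (\<forall>j. z ^ j = 1 \<longleftrightarrow> m dvd j)"

lemma prim_pow:
  assumes "prim m z" "coprime u m" shows "prim m (z ^ u)"
proof -
  have m0: "m > 0" and P: "\<And>j. z ^ j = 1 \<longleftrightarrow> m dvd j" using assms(1) unfolding prim_def by auto
  have cm: "coprime m u" using assms(2) by (simp add: coprime_commute)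
  have "(z ^ u) ^ j = 1 \<longleftrightarrow> m dvd j" for j
  proof -
    have "(z ^ u) ^ j = z ^ (u * j)" by (simp add: power_mult)
    hence "(z ^ u) ^ j = 1 \<longleftrightarrow> m dvd u * j" using P by simp
    also have "\<dots> \<longleftrightarrow> m dvd j" using coprime_dvd_mult_right_iff[OF cm] by blast
    finally show ?thesis .
  qed
  thus ?thesis using m0 unfolding prim_def by blast
qed

lemma primitive_dvdI:
  fixes f F Q :: "int poly"
  assumes "content f = 1" "c \<noteq> 0" "smult c F = f * Q"
  shows "f dvd F"
proof -
  have "content (smult c F) = content Q" using assms by (simp add: content_mult)
  hence cQ: "content Q = \<bar>c\<bar> * content F" by simp
  have "smult c F = f * smult (content Q) (primitive_part Q)"
    using assms(3) by (simp add: content_times_primitive_part)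
  also have "\<dots> = smult \<bar>c\<bar> (f * smult (content F) (primitive_part Q))"
    by (simp add: cQ)
  finally have "smult \<bar>c\<bar> (smult (sgn c) F) = smult \<bar>c\<bar> (f * smult (content F) (primitive_part Q))"
    using mult_sgn_abs[of c] by (simp add: mult.commute)
  hence e: "smult (sgn c) F = f * smult (content F) (primitive_part Q)"
    using smult_cancel[of "\<bar>c\<bar>" "smult (sgn c) F" "f * smult (content F) (primitive_part Q)"] assms(2)
    by simp
  have "F = smult (sgn c * sgn c) F" using assms(2) by (simp add: sgn_mult_self_eq)
  also have "\<dots> = smult (sgn c) (smult (sgn c) F)" by simp
  also have "\<dots> = f * smult (sgn c * content F) (primitive_part Q)"
    unfolding e by (simp add: mult_smult_right)
  finally have "F = f * smult (sgn c * content F) (primitive_part Q)" .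
  thus ?thesis by (rule dvdI)
qed


lemma minpoly:
  assumes "prim m z"
  obtains f :: "int poly" where "lead_coeff f = 1" "poly (ci f) z = 0"
    "\<And>F. poly (ci F) z = 0 \<Longrightarrow> f dvd F"
proof -
  have m0: "m > 0" and zm: "z ^ m = 1" using assms by (auto simp: prim_def)
  define S where "S = {F::int poly. F \<noteq> 0 \<and> poly (ci F) z = 0}"
  define E :: "int poly" where "E = monom 1 m - 1"
  have "coeff E m = 1" using m0 unfolding E_def by (simp add: coeff_monom)
  hence E0: "E \<noteq> 0" by auto
  have Ez: "poly (ci E) z = 0" using zm unfolding E_def by (simp add: poly_monom)
  have "E \<in> S" using E0 Ez unfolding S_def by auto
  define d where "d = (LEAST n. \<exists>F\<in>S. degree F = n)"
  have "\<exists>F\<in>S. degree F = d" unfolding d_def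
    by (rule LeastI[of _ "degree E"]) (use \<open>E \<in> S\<close> in blast)
  then obtain F0 where F0: "F0 \<in> S" "degree F0 = d" by blast
  have dmin: "d \<le> degree F" if "F \<in> S" for F unfolding d_def using that by (intro Least_le) blast
  define f0 where "f0 = primitive_part F0"
  have F00: "F0 \<noteq> 0" using F0 unfolding S_def by auto
  have F0eq: "F0 = smult (content F0) f0" unfolding f0_def by (simp add: content_times_primitive_part)
  have cF0: "content F0 \<noteq> 0" using F00 by simp
  have e: "poly (ci F0) z = of_int (content F0) * poly (ci f0) z" by (subst F0eq) simp
  have "poly (ci F0) z = 0" using F0 unfolding S_def by blast
  hence "of_int (content F0) * poly (ci f0) z = 0" using e by simp
  hence f0z: "poly (ci f0) z = 0" using cF0 by simp
  have f00: "f0 \<noteq> 0" using F00 unfolding f0_def by simp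
  have degf0: "degree f0 = d" using F0 unfolding f0_def by simp
  have cf0: "content f0 = 1" using F00 unfolding f0_def by simp
  have dvd0: "f0 dvd F" if Fz: "poly (ci F) z = 0" for F
  proof -
    obtain Q R where QR: "pseudo_divmod F f0 = (Q, R)" by (cases "pseudo_divmod F f0")
    define c where "c = lead_coeff f0 ^ (Suc (degree F) - degree f0)"
    have c0: "c \<noteq> 0" unfolding c_def using f00 by simp
    have eq: "smult c F = f0 * Q + R" and Rdeg: "R = 0 \<or> degree R < degree f0"
      using pseudo_divmod[OF f00 QR] unfolding c_def by auto
    have "poly (ci R) z = 0"
    proof -
      have "poly (ci (smult c F)) z = poly (ci (f0 * Q + R)) z" by (simp only: eq)
      thus ?thesis using Fz f0z by simp
    qed
    hence "R = 0" using Rdeg dmin[of R] degf0 unfolding S_def by fastforce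
    with eq have "smult c F = f0 * Q" by simp
    thus ?thesis using primitive_dvdI[OF cf0 c0] by blast
  qed
  obtain g where g: "E = f0 * g" using dvd0[OF Ez] by (elim dvdE)
  have "degree E = m"
  proof (rule antisym)
    show "degree E \<le> m" unfolding E_def by (rule degree_le) (auto simp: coeff_monom)
    show "m \<le> degree E" using \<open>coeff E m = 1\<close> by (intro le_degree) simp
  qed
  hence "lead_coeff E = 1" using \<open>coeff E m = 1\<close> by simp
  hence "lead_coeff f0 * lead_coeff g = 1" using g by (simp add: lead_coeff_mult)
  hence lc: "lead_coeff f0 = 1 \<or> lead_coeff f0 = -1" using zmult_eq_1_iff by blast
  define f where "f = smult (lead_coeff f0) f0"
  have cc: "lead_coeff f0 * lead_coeff f0 = 1" using lc by auto
  have "lead_coeff f = lead_coeff f0 * lead_coeff f0" unfolding f_def using f00 by simp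
  hence "lead_coeff f = 1" using cc by simp
  moreover have "poly (ci f) z = 0" unfolding f_def using f0z by simp
  moreover have "\<forall>F. poly (ci F) z = 0 \<longrightarrow> f dvd F"
  proof (intro allI impI)
    fix F assume Fz: "poly (ci F) z = 0"
    from dvd0[OF Fz] obtain G where "F = f0 * G" by (elim dvdE)
    hence "F = f * smult (lead_coeff f0) G" unfolding f_def using cc
      by (simp add: mult_smult_left mult_smult_right)
    thus "f dvd F" by (rule dvdI)
  qed
  ultimately show ?thesis using that by blast
qed

lemma poly_ci_monom: "poly (ci (monom c n)) z = of_int c * z ^ n"
  by (simp add: poly_monom)

lemma conj_prime:
  assumes pr: "prim m z" and q: "prime q" and qm: "\<not> q dvd m" and Fz: "poly (ci F) z = 0"
  shows "poly (ci F) (z ^ q) = 0"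
proof -
  obtain f where lf: "lead_coeff f = 1" and fz: "poly (ci f) z = 0"
     and fdvd: "\<And>F. poly (ci F) z = 0 \<Longrightarrow> f dvd F"
    using minpoly[OF pr] by blast
  have m0: "m > 0" and zm: "z ^ m = 1" using pr by (auto simp: prim_def)
  have q0: "q > 0" using prime_gt_0_nat[OF q] .
  define w where "w = z ^ q"
  have wm: "w ^ m = 1" unfolding w_def using zm by (metis power_mult power_one mult.commute)
  have key: "poly (ci f) w = 0"
  proof (rule ccontr)
    assume fw: "poly (ci f) w \<noteq> 0"
    define E :: "int poly" where "E = monom 1 m - 1"
    have Ez: "poly (ci E) z = 0" using zm unfolding E_def by (simp add: poly_monom)
    obtain g where g: "E = f * g" using fdvd[OF Ez] by (elim dvdE)
    have "poly (ci E) w = 0" using wm unfolding E_def by (simp add: poly_monom)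
    hence gw: "poly (ci g) w = 0" using fw unfolding g by simp
    have "pderiv (ci E) = ci f * pderiv (ci g) + ci g * pderiv (ci f)"
      unfolding g by (simp add: pderiv_mult)
    hence "poly (pderiv (ci E)) w = poly (ci f) w * poly (pderiv (ci g)) w"
      using gw by simp
    moreover have "poly (pderiv (ci E)) w = of_nat m * w ^ (m - 1)"
      unfolding E_def by (simp add: pderiv_monom poly_monom pderiv_diff)
    ultimately have d1: "of_nat m * w ^ (m - 1) = poly (ci f) w * poly (pderiv (ci g)) w" by simp
    have "w ^ (m - 1) * w = w ^ m" using m0 by (cases m) (simp_all add: power_Suc2)
    hence "of_nat m = of_nat m * w ^ (m - 1) * w" using wm by (metis mult.assoc mult.right_neutral)
    also have "\<dots> = poly (ci f) w * poly (pderiv (ci g)) w * w" using d1 by simp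
    finally have d2: "of_nat m = poly (ci f) w * poly (pderiv (ci g)) w * w" .
    obtain R0 where R0: "f ^ q - pcompose f (monom 1 q) = of_nat q * R0"
      using frob_poly[OF q, of f] unfolding qd_def by blast
    have "(of_nat q :: int poly) * R0 = smult (int q) R0" by (simp add: of_nat_poly)
    with R0 have R: "f ^ q - pcompose f (monom 1 q) = smult (int q) R0" by simp
    have "poly (ci (f ^ q - pcompose f (monom 1 q))) z = poly (ci (smult (int q) R0)) z"
      by (simp only: R)
    hence "poly (ci f) z ^ q - poly (ci f) (z ^ q) = of_nat q * poly (ci R0) z"
      by (simp add: poly_pcompose poly_monom)
    moreover have "poly (ci f) z ^ q = 0" using fz q0 by simp
    ultimately have "- poly (ci f) w = of_nat q * poly (ci R0) z"
      unfolding w_def by simp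
    hence "- (- poly (ci f) w) = - (of_nat q * poly (ci R0) z)" by (rule arg_cong)
    hence fw2: "poly (ci f) w = - (of_nat q * poly (ci R0) z)" by (simp only: minus_minus)
    define P where "P = - (R0 * pcompose (pderiv g) (monom 1 q) * monom 1 q)"
    have "poly (ci P) z = - (poly (ci R0) z * poly (pderiv (ci g)) w * w)"
      unfolding P_def w_def by (simp add: poly_pcompose poly_monom)
    hence "of_nat q * poly (ci P) z = poly (ci f) w * poly (pderiv (ci g)) w * w"
      using fw2 by simp
    hence Pz: "of_nat q * poly (ci P) z = of_nat m" using d2 by simp
    define T where "T = smult (int q) P - [:int m:]"
    have "poly (ci T) z = 0" unfolding T_def using Pz by simp
    hence "f dvd T" by (rule fdvd)
    then obtain H where H: "T = f * H" by (elim dvdE)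
    obtain S Rm where SR: "pseudo_divmod P f = (S, Rm)" by (cases "pseudo_divmod P f")
    have f0: "f \<noteq> 0" using lf by auto
    have PS: "P = f * S + Rm" and Rdeg: "Rm = 0 \<or> degree Rm < degree f"
      using pseudo_divmod[OF f0 SR] lf by auto
    have df: "degree f > 0"
    proof (rule ccontr)
      assume "\<not> degree f > 0"
      hence d0: "degree f = 0" by simp
      hence "[:coeff f 0:] = f" by (rule degree_0_id)
      moreover have "coeff f 0 = 1" using lf d0 by simp
      ultimately have "f = [:1:]" by simp
      thus False using fz by simp
    qed
    have eq: "smult (int q) Rm - [:int m:] = f * (H - smult (int q) S)"
    proof -
      have "smult (int q) Rm - [:int m:] = T - f * smult (int q) S"
        unfolding T_def PS by (simp add: smult_add_right mult_smult_right)
      also have "\<dots> = f * (H - smult (int q) S)" unfolding H by (simp add: right_diff_distrib)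
      finally show ?thesis .
    qed
    have "H - smult (int q) S = 0"
    proof (rule ccontr)
      assume ne: "H - smult (int q) S \<noteq> 0"
      have "degree (f * (H - smult (int q) S)) \<ge> degree f"
        using ne f0 by (simp add: degree_mult_eq)
      moreover have "degree (smult (int q) Rm - [:int m:]) < degree f"
      proof -
        have "degree (smult (int q) Rm - [:int m:]) \<le> max (degree (smult (int q) Rm)) (degree [:int m:])"
          by (rule degree_diff_le_max)
        also have "\<dots> \<le> max (degree Rm) 0" by simp
        finally show ?thesis using Rdeg df by auto
      qed
      ultimately show False using eq by simp
    qed
    hence "smult (int q) Rm = [:int m:]" using eq by simp
    hence "coeff (smult (int q) Rm) 0 = int m" by simp
    hence "int q * coeff Rm 0 = int m" by simp
    hence "int q dvd int m" by (metis dvdI)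
    thus False using qm by simp
  qed
  obtain G where "F = f * G" using fdvd[OF Fz] by (elim dvdE)
  thus ?thesis using key unfolding w_def by simp
qed

lemma conj_coprime:
  assumes "prim m z" "coprime u m" "poly (ci F) z = 0"
  shows "poly (ci F) (z ^ u) = 0"
  using assms
proof (induction u arbitrary: z rule: less_induct)
  case (less u)
  show ?case
  proof (cases "u \<le> 1")
    case True
    show ?thesis
    proof (cases "u = 0")
      case True
      hence "m = 1" using less.prems(2) by simp
      have P: "\<And>j. z ^ j = 1 \<longleftrightarrow> m dvd j" using less.prems(1) by (simp add: prim_def)
      have "z ^ 1 = 1" using P[of 1] \<open>m = 1\<close> by simp
      thus ?thesis using less.prems(3) True by simp
    next
      case False
      with \<open>u \<le> 1\<close> have "u = 1" by simp
      thus ?thesis using less.prems(3) by simp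
    qed
  next
    case False
    hence "u \<noteq> 1" by simp
    then obtain q where q: "prime q" "q dvd u" using prime_factor_nat[of u] by blast
    then obtain u' where u: "u = q * u'" by (elim dvdE)
    have qm: "coprime q m" using less.prems(2) unfolding u by simp
    have q1: "q > 1" using prime_gt_1_nat[OF q(1)] .
    have nqm: "\<not> q dvd m" using qm q1 coprime_common_divisor_nat[of q m q] by auto
    have u'm: "coprime u' m" using less.prems(2) unfolding u by simp
    have "u' \<noteq> 0" using \<open>\<not> u \<le> 1\<close> u by (cases "u' = 0") auto
    hence "u' < u" using u q1 by simp
    have Fq: "poly (ci F) (z ^ q) = 0"
      using conj_prime[OF less.prems(1) q(1) nqm less.prems(3)] .
    have "prim m (z ^ q)" using prim_pow[OF less.prems(1) qm] .
    from less.IH[OF \<open>u' < u\<close> this u'm Fq]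
    show ?thesis unfolding u by (simp add: power_mult)
  qed
qed

definition zeta :: "nat \<Rightarrow> complex" where "zeta m = cis (2 * pi / real m)"

lemma zeta_pow: "zeta m ^ k = cis (2 * pi * real k / real m)"
  unfolding zeta_def DeMoivre by (simp add: field_simps)

lemma zeta_m: "m > 0 \<Longrightarrow> zeta m ^ m = 1"
  unfolding zeta_pow by (simp add: complex_eq_iff)

lemma zeta_roots:
  assumes "m > 0" "z ^ m = 1" shows "\<exists>k. z = zeta m ^ k"
proof -
  have "z \<in> (\<lambda>k. cis (2 * pi * real k / real m)) ` {..<m}"
    using bij_betw_roots_unity[OF assms(1)] assms(2) unfolding bij_betw_def by auto
  thus ?thesis unfolding zeta_pow by blast
qed

lemma zeta_prim:
  assumes m: "m > 0" shows "prim m (zeta m)"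
  unfolding prim_def
proof (intro conjI allI iffI)
  show "m > 0" by fact
next
  fix j assume "m dvd j"
  then obtain t where "j = m * t" by (elim dvdE)
  thus "zeta m ^ j = 1" using zeta_m[OF m] by (simp add: power_mult)
next
  fix j assume j: "zeta m ^ j = 1"
  have "zeta m ^ j = zeta m ^ (m * (j div m) + j mod m)" by (simp only: mult_div_mod_eq)
  also have "\<dots> = (zeta m ^ m) ^ (j div m) * zeta m ^ (j mod m)" by (simp only: power_add power_mult)
  also have "\<dots> = zeta m ^ (j mod m)" using zeta_m[OF m] by simp
  finally have "cis (2 * pi * real (j mod m) / real m) = cis (2 * pi * real 0 / real m)"
    using j unfolding zeta_pow[symmetric] by simp
  moreover have inj: "inj_on (\<lambda>k. cis (2 * pi * real k / real m)) {..<m}"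
    using bij_betw_roots_unity[OF m] unfolding bij_betw_def by auto
  ultimately have "j mod m = 0" using m inj_onD[OF inj, of "j mod m" 0] by auto
  thus "m dvd j" by auto
qed

lemma prim_pow_mod: "prim m z \<Longrightarrow> z ^ e = z ^ (e mod m)"
proof -
  assume "prim m z"
  hence zm: "z ^ m = 1" unfolding prim_def by auto
  have "z ^ e = z ^ (m * (e div m) + e mod m)" by (simp only: mult_div_mod_eq)
  also have "\<dots> = (z ^ m) ^ (e div m) * z ^ (e mod m)" by (simp only: power_add power_mult)
  also have "\<dots> = z ^ (e mod m)" using zm by simp
  finally show ?thesis .
qed

lemma orth:
  assumes "prim p w" shows "(\<Sum>k<p. w ^ (k * d)) = (if p dvd d then of_nat p else 0)"
proof (cases "p dvd d")
  case True
  have "w ^ (k * d) = 1" for k using assms True unfolding prim_def by auto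
  thus ?thesis using True by simp
next
  case False
  define v where "v = w ^ d"
  have v1: "v \<noteq> 1" using assms False unfolding prim_def v_def by auto
  have vp: "v ^ p = 1" using assms unfolding prim_def v_def by (simp flip: power_mult)
  have "(\<Sum>k<p. w ^ (k * d)) = (\<Sum>k<p. v ^ k)" unfolding v_def
    by (intro sum.cong refl) (metis power_mult mult.commute)
  also have "\<dots> = (v ^ p - 1) / (v - 1)" using v1 by (rule geometric_sum)
  also have "\<dots> = 0" using vp by simp
  finally show ?thesis using False by simp
qed

lemma common_denom:
  fixes c :: "'i \<Rightarrow> complex"
  assumes "finite K" "\<forall>i\<in>K. c i \<in> \<rat>"
  shows "\<exists>D::int. D > 0 \<and> (\<forall>i\<in>K. of_int D * c i \<in> \<int>)"
  using assms
proof (induction K rule: finite_induct)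
  case empty
  show ?case by (rule exI[of _ 1]) simp
next
  case (insert i K)
  then obtain D :: int where D: "D > 0" "\<forall>j\<in>K. of_int D * c j \<in> \<int>" by auto
  have "c i \<in> \<rat>" using insert.prems by auto
  then obtain r where r: "c i = of_rat r" by (elim Rats_cases)
  obtain a b where ab: "quotient_of r = (a, b)" by (cases "quotient_of r")
  have b0: "b > 0" using quotient_of_denom_pos[OF ab] .
  have rab: "r = of_int a / of_int b" using quotient_of_div[OF ab] .
  have ci: "c i = of_int a / of_int b" using r rab by (simp add: of_rat_divide)
  have e: "of_int (D * b) * c i = of_int D * of_int a"
    using b0 by (subst ci) (simp add: field_simps)
  have 1: "of_int (D * b) * c i \<in> \<int>" unfolding e by (metis Ints_mult Ints_of_int)
  have 2: "of_int (D * b) * c j \<in> \<int>" if "j \<in> K" for j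
  proof -
    have "of_int (D * b) * c j = of_int b * (of_int D * c j)" by simp
    thus ?thesis using D(2) that by (metis Ints_mult Ints_of_int)
  qed
  show ?case using 1 2 D(1) b0 by (intro exI[of _ "D * b"]) auto
qed

lemma twisted_vanish:
  fixes K :: "'i set" and c :: "'i \<Rightarrow> complex" and e :: "'i \<Rightarrow> nat"
  assumes fin: "finite K" and rat: "\<forall>i\<in>K. c i \<in> \<rat>" and pr: "prim m z"
    and van: "(\<Sum>i\<in>K. c i * z ^ e i) = 0" and cop: "coprime u m"
  shows "(\<Sum>i\<in>K. c i * (z ^ u) ^ e i) = 0"
proof -
  obtain D :: int where D: "D > 0" "\<forall>i\<in>K. of_int D * c i \<in> \<int>"
    using common_denom[OF fin rat] by blast
  have "\<forall>i\<in>K. \<exists>b. of_int D * c i = of_int b" using D(2) by (auto elim!: Ints_cases)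
  then obtain B where B: "\<forall>i\<in>K. of_int D * c i = of_int (B i)" by metis
  define F where "F = (\<Sum>i\<in>K. monom (B i) (e i))"
  have ev: "poly (ci F) w = of_int D * (\<Sum>i\<in>K. c i * w ^ e i)" for w
  proof -
    have "poly (ci F) w = (\<Sum>i\<in>K. of_int (B i) * w ^ e i)"
      unfolding F_def by (simp add: poly_sum poly_monom)
    also have "\<dots> = (\<Sum>i\<in>K. of_int D * (c i * w ^ e i))"
      using B by (intro sum.cong refl) (simp add: mult.assoc[symmetric])
    also have "\<dots> = of_int D * (\<Sum>i\<in>K. c i * w ^ e i)" by (simp add: sum_distrib_left)
    finally show ?thesis .
  qed
  have "poly (ci F) z = 0" using ev[of z] van by simp
  hence "poly (ci F) (z ^ u) = 0" using conj_coprime[OF pr cop] by blast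
  thus ?thesis using ev[of "z ^ u"] D(1) by simp
qed


lemma aux_uniq:
  fixes p m' k1 k2 :: nat
  assumes "prime p" "\<not> p dvd m'" "p dvd 1 + m' * k1" "p dvd 1 + m' * k2" "k1 \<le> k2" "k2 < p"
  shows "k1 = k2"
proof -
  have "1 + m' * k2 = (1 + m' * k1) + m' * (k2 - k1)" using assms(5)
    by (simp add: diff_mult_distrib2)
  hence "p dvd m' * (k2 - k1)" using assms(3,4) by (metis dvd_add_right_iff)
  hence "p dvd k2 - k1" using assms(1,2) by (simp add: prime_dvd_mult_iff)
  moreover have "k2 - k1 < p" using assms(6) by linarith
  ultimately have "k2 - k1 = 0" using nat_dvd_not_less by blast
  thus ?thesis using assms(5) by simp
qed

lemma coprime_1_mult: "coprime (1 + m' * k) (m' :: nat)"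
proof (rule coprimeI)
  fix d assume d: "d dvd 1 + m' * k" "d dvd m'"
  hence "d dvd m' * k" by simp
  hence "d dvd 1" using d(1) by (metis dvd_add_left_iff)
  thus "is_unit d" by simp
qed

lemma mann_prime:
  fixes K :: "'i set" and c :: "'i \<Rightarrow> complex" and e :: "'i \<Rightarrow> nat"
  assumes fin: "finite K" and i0: "i0 \<in> K" and rat: "\<forall>i\<in>K. c i \<in> \<rat>"
    and pr: "prim m z"
    and van: "(\<Sum>i\<in>K. c i * z ^ e i) = 0"
    and minl: "\<And>I. I \<subseteq> K \<Longrightarrow> I \<noteq> {} \<Longrightarrow> (\<Sum>i\<in>I. c i * z ^ e i) = 0 \<Longrightarrow> I = K"
    and least: "\<And>n. 0 < n \<Longrightarrow> n < m \<Longrightarrow> \<not> (\<forall>i\<in>K. (z ^ e i) ^ n = 1)"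
    and e0: "m dvd e i0"
    and p: "prime p" "p dvd m"
  shows "p \<le> card K \<and> \<not> p^2 dvd m"
proof -
  have m0: "m > 0" using pr by (simp add: prim_def)
  have p1: "p > 1" using prime_gt_1_nat[OF p(1)] .
  obtain m' where mm: "m = p * m'" using p(2) by (elim dvdE)
  have m'0: "m' > 0" using m0 mm by (cases m') auto
  have m'm: "m' < m" using mm p1 m'0 by simp
  define w where "w = z ^ m'"
  have zpow: "z ^ j = 1 \<longleftrightarrow> m dvd j" for j using pr by (simp add: prim_def)
  have wpr: "prim p w"
  proof -
    have "w ^ j = 1 \<longleftrightarrow> p dvd j" for j
    proof -
      have "w ^ j = z ^ (m' * j)" unfolding w_def by (simp add: power_mult)
      hence "w ^ j = 1 \<longleftrightarrow> m' * p dvd m' * j" using zpow mm by (simp add: mult.commute)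
      also have "\<dots> \<longleftrightarrow> p dvd j" using m'0 by simp
      finally show ?thesis .
    qed
    thus ?thesis using p1 unfolding prim_def by auto
  qed
  have "w ^ p = 1" using wpr unfolding prim_def by simp
  hence w0: "w \<noteq> 0" using p1 by (cases "w = 0") (auto simp: power_0_left)
  define r where "r i = e i mod p" for i
  define A where "A s = (\<Sum>i\<in>{i\<in>K. r i = s}. c i * z ^ e i)" for s
  define T where "T k = (\<Sum>i\<in>K. c i * (z ^ (1 + m' * k)) ^ e i)" for k
  define Bad where "Bad = {k\<in>{..<p}. \<not> coprime (1 + m' * k) m}"
  have Tzero: "T k = 0" if "k \<notin> Bad" "k < p" for k
  proof -
    have "coprime (1 + m' * k) m" using that unfolding Bad_def by auto
    thus ?thesis unfolding T_def by (rule twisted_vanish[OF fin rat pr van])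
  qed
  have Texp: "T k = (\<Sum>s<p. w ^ (k * s) * A s)" for k
  proof -
    have pw: "(z ^ (1 + m' * k)) ^ e i = z ^ e i * w ^ (k * r i)" for i
    proof -
      have "(z ^ (1 + m' * k)) ^ e i = z ^ e i * w ^ (k * e i)"
        unfolding w_def by (simp add: power_mult[symmetric] power_add algebra_simps)
      also have "w ^ (k * e i) = w ^ (k * r i)"
        using prim_pow_mod[OF wpr, of "k * e i"] prim_pow_mod[OF wpr, of "k * r i"]
        unfolding r_def by (simp add: mod_mult_right_eq)
      finally show ?thesis .
    qed
    have "T k = (\<Sum>i\<in>K. w ^ (k * r i) * (c i * z ^ e i))" unfolding T_def
      by (intro sum.cong refl) (subst pw, simp add: mult_ac)
    also have "\<dots> = (\<Sum>s<p. \<Sum>i\<in>{i\<in>K. r i = s}. w ^ (k * r i) * (c i * z ^ e i))"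
      using fin p1 by (intro sum.group[symmetric]) (auto simp: r_def)
    also have "\<dots> = (\<Sum>s<p. w ^ (k * s) * A s)" unfolding A_def
      by (intro sum.cong refl) (auto simp: sum_distrib_left)
    finally show ?thesis .
  qed
  have inv: "of_nat p * A s = (\<Sum>k<p. w ^ (k * (p - s)) * T k)" if sp: "s < p" for s
  proof -
    have "(\<Sum>k<p. w ^ (k * (p - s)) * T k) = (\<Sum>k<p. \<Sum>s'<p. w ^ (k * (p - s + s')) * A s')"
      unfolding Texp by (intro sum.cong refl) (simp add: sum_distrib_left power_add add_mult_distrib2 mult.assoc)
    also have "\<dots> = (\<Sum>s'<p. A s' * (\<Sum>k<p. w ^ (k * (p - s + s'))))"
      by (subst sum.swap) (simp add: sum_distrib_left mult.commute)
    also have "\<dots> = (\<Sum>s'<p. A s' * (if s' = s then of_nat p else 0))"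
    proof (intro sum.cong refl)
      fix s' assume s': "s' \<in> {..<p}"
      have "p dvd (p - s + s') \<longleftrightarrow> s' = s"
      proof
        assume d: "p dvd p - s + s'"
        show "s' = s"
        proof (rule ccontr)
          assume ne: "s' \<noteq> s"
          show False
          proof (cases "s' < s")
            case True
            hence "0 < p - s + s'" "p - s + s' < p" using sp by auto
            thus False using d nat_dvd_not_less by blast
          next
            case False
            hence gt: "s < s'" using ne by simp
            have "p - s + s' = p + (s' - s)" using sp gt by simp
            hence "p dvd s' - s" using d by (simp add: dvd_add_right_iff)
            moreover have "0 < s' - s" "s' - s < p" using gt s' by auto
            ultimately show False using nat_dvd_not_less by blast
          qed
        qed
      qed (use sp in simp)
      thus "A s' * (\<Sum>k<p. w ^ (k * (p - s + s'))) = A s' * (if s' = s then of_nat p else 0)"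
        by (simp add: orth[OF wpr])
    qed
    also have "\<dots> = of_nat p * A s" using sp by (simp add: if_distrib cong: if_cong)
    finally show ?thesis by simp
  qed
  have Bad_dvd: "p dvd 1 + m' * k \<and> \<not> p dvd m'" if "k \<in> Bad" for k
  proof -
    have nc: "\<not> coprime (1 + m' * k) m" using that unfolding Bad_def by auto
    have "\<not> coprime (1 + m' * k) p" using nc coprime_1_mult[of m' k] unfolding mm
      by (simp add: coprime_mult_right_iff)
    hence pd: "p dvd 1 + m' * k" using p(1) by (metis prime_imp_coprime coprime_commute)
    moreover have "\<not> p dvd m'"
    proof
      assume "p dvd m'"
      hence "p dvd m' * k" by simp
      with pd have "p dvd 1" by (metis dvd_add_left_iff)
      thus False using p1 by simp
    qed
    ultimately show ?thesis ..
  qed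
  have Bad_single: "k1 = k2" if "k1 \<in> Bad" "k2 \<in> Bad" for k1 k2
  proof (cases "k1 \<le> k2")
    case True
    thus ?thesis using aux_uniq[OF p(1)] Bad_dvd that unfolding Bad_def by blast
  next
    case False
    thus ?thesis using aux_uniq[OF p(1), of m' k2 k1] Bad_dvd that unfolding Bad_def by auto
  qed
  have r0: "r i0 = 0" using dvd_trans[OF p(2) e0] unfolding r_def by simp
  have not_all: "\<not> (\<forall>s<p. A s = 0)"
  proof
    assume all: "\<forall>s<p. A s = 0"
    have "A 0 = 0" using all p1 by auto
    hence "{i\<in>K. r i = 0} = K" using minl[of "{i\<in>K. r i = 0}"] i0 r0 unfolding A_def by auto
    hence pe: "\<forall>i\<in>K. p dvd e i" unfolding r_def by auto
    have "\<forall>i\<in>K. (z ^ e i) ^ m' = 1"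
    proof
      fix i assume "i \<in> K"
      then obtain t where "e i = p * t" using pe by (auto elim: dvdE)
      hence "e i * m' = m * t" using mm by simp
      thus "(z ^ e i) ^ m' = 1" using zpow by (simp flip: power_mult)
    qed
    thus False using least[OF m'0 m'm] by blast
  qed
  have Ainv: "of_nat p * A s = (\<Sum>k\<in>Bad. w ^ (k * (p - s)) * T k)" if "s < p" for s
  proof -
    have "of_nat p * A s = (\<Sum>k<p. w ^ (k * (p - s)) * T k)" using inv[OF that] .
    also have "\<dots> = (\<Sum>k\<in>Bad. w ^ (k * (p - s)) * T k)"
      by (rule sum.mono_neutral_right) (auto simp: Bad_def Tzero)
    finally show ?thesis .
  qed
  have Bad_ne: "Bad \<noteq> {}"
  proof
    assume "Bad = {}"
    hence "\<forall>s<p. A s = 0" using Ainv by simp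
    thus False using not_all by blast
  qed
  then obtain ks where ks: "ks \<in> Bad" by blast
  have Bad_eq: "Bad = {ks}" using ks Bad_single by blast
  have nsq: "\<not> p^2 dvd m"
  proof
    assume "p^2 dvd m"
    hence "p * p dvd p * m'" unfolding mm by (simp add: power2_eq_square)
    hence "p dvd m'" using p1 by simp
    thus False using Bad_dvd[OF ks] by blast
  qed
  have cardK: "p \<le> card K"
  proof (rule ccontr)
    assume "\<not> p \<le> card K"
    hence lt: "card K < p" by simp
    have "card (r ` K) \<le> card K" by (rule card_image_le[OF fin])
    hence "r ` K \<noteq> {..<p}" using lt by auto
    moreover have "r ` K \<subseteq> {..<p}" unfolding r_def using p1 by auto
    ultimately obtain s0 where s0: "s0 < p" "s0 \<notin> r ` K" by auto
    have emp: "{i\<in>K. r i = s0} = {}" using s0 by auto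
    have "A s0 = 0" unfolding A_def emp by (rule sum.empty)
    hence "w ^ (ks * (p - s0)) * T ks = 0" using Ainv[OF s0(1)] Bad_eq by simp
    hence "T ks = 0" using w0 by simp
    hence "\<forall>s<p. A s = 0" using Ainv Bad_eq by simp
    thus False using not_all by blast
  qed
  show ?thesis using cardK nsq by blast
qed

lemma sqfree_dvd_primorial:
  fixes m n :: nat
  assumes "m > 0" "\<And>p. prime p \<Longrightarrow> p dvd m \<Longrightarrow> p \<le> n \<and> \<not> p^2 dvd m"
  shows "m dvd (\<Prod>p\<in>{p. prime p \<and> p \<le> n}. p)"
  using assms
proof (induction m rule: less_induct)
  case (less m)
  show ?case
  proof (cases "m = 1")
    case True thus ?thesis by simp
  next
    case False
    then obtain p where p: "prime p" "p dvd m" using prime_factor_nat[of m] by blast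
    then obtain m'' where mm: "m = p * m''" by (elim dvdE)
    have p1: "p > 1" using prime_gt_1_nat[OF p(1)] .
    have m''0: "m'' > 0" using less.prems(1) mm by (cases m'') auto
    have "m'' < m" using mm p1 m''0 by simp
    have pn: "p \<le> n" and nsq: "\<not> p^2 dvd m" using less.prems(2)[OF p] by auto
    have npm: "\<not> p dvd m''"
    proof
      assume "p dvd m''"
      then obtain t where "m'' = p * t" by (elim dvdE)
      hence "m = p^2 * t" using mm by (simp add: power2_eq_square)
      thus False using nsq by simp
    qed
    have IH: "m'' dvd (\<Prod>p\<in>{p. prime p \<and> p \<le> n}. p)"
    proof (rule less.IH[OF \<open>m'' < m\<close> m''0])
      fix q assume q: "prime q" "q dvd m''"
      hence "q dvd m" using mm by simp
      hence "q \<le> n \<and> \<not> q^2 dvd m" using less.prems(2)[OF q(1)] by blast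
      moreover have "q^2 dvd m'' \<Longrightarrow> q^2 dvd m" using mm by simp
      ultimately show "q \<le> n \<and> \<not> q^2 dvd m''" by blast
    qed
    have fin: "finite {p. prime p \<and> p \<le> n}" by simp
    have "p dvd (\<Prod>p\<in>{p. prime p \<and> p \<le> n}. p)"
      using p(1) pn by (intro dvd_prodI[OF fin, of p "\<lambda>p. p"]) auto
    moreover have "coprime p m''" using p(1) npm by (simp add: prime_imp_coprime)
    ultimately show ?thesis unfolding mm using IH by (intro divides_mult)
  qed
qed


lemma mann:
  fixes K :: "'i set" and c x :: "'i \<Rightarrow> complex"
  assumes fin: "finite K" and i0: "i0 \<in> K" and i1: "i1 \<in> K"
    and rat: "\<forall>i\<in>K. c i \<in> \<rat>"
    and ru: "\<forall>i\<in>K. root_of_unity (x i)"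
    and van: "(\<Sum>i\<in>K. c i * x i) = 0"
    and minl: "\<And>I. I \<subseteq> K \<Longrightarrow> I \<noteq> {} \<Longrightarrow> (\<Sum>i\<in>I. c i * x i) = 0 \<Longrightarrow> I = K"
  shows "(x i1 / x i0) ^ (\<Prod>p\<in>{p. prime p \<and> p \<le> card K}. p) = 1"
proof -
  have "\<forall>i\<in>K. \<exists>n. n > 0 \<and> x i ^ n = 1" using ru unfolding root_of_unity_def by blast
  then obtain N where N: "\<And>i. i \<in> K \<Longrightarrow> N i > 0 \<and> x i ^ N i = 1" by metis
  have xnz: "x i \<noteq> 0" if "i \<in> K" for i using N[OF that] by (cases "x i = 0") (auto simp: power_0_left)
  define \<rho> where "\<rho> i = x i / x i0" for i
  define M0 where "M0 = (\<Prod>i\<in>K. N i)"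
  have M0: "M0 > 0" unfolding M0_def using N by (simp add: prod_pos)
  have xM0: "x i ^ M0 = 1" if "i \<in> K" for i
  proof -
    have "N i dvd M0" unfolding M0_def using fin that by (rule dvd_prodI)
    then obtain t where "M0 = N i * t" by (elim dvdE)
    thus ?thesis using N[OF that] by (simp add: power_mult)
  qed
  have PM0: "0 < M0 \<and> (\<forall>i\<in>K. \<rho> i ^ M0 = 1)"
    using M0 xM0 i0 unfolding \<rho>_def by (simp add: power_divide)
  define m where "m = (LEAST n. 0 < n \<and> (\<forall>i\<in>K. \<rho> i ^ n = 1))"
  have Pm: "0 < m \<and> (\<forall>i\<in>K. \<rho> i ^ m = 1)"
    unfolding m_def by (rule LeastI[of _ M0]) (rule PM0)
  have m0: "m > 0" using Pm by blast
  have least: "\<not> (\<forall>i\<in>K. \<rho> i ^ n = 1)" if "0 < n" "n < m" for n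
    using not_less_Least[of n "\<lambda>n. 0 < n \<and> (\<forall>i\<in>K. \<rho> i ^ n = 1)"] that unfolding m_def[symmetric]
    by blast
  define z where "z = zeta m"
  have pr: "prim m z" unfolding z_def using m0 by (rule zeta_prim)
  have "\<forall>i\<in>K. \<exists>k. \<rho> i = z ^ k" using Pm zeta_roots[OF m0] unfolding z_def by blast
  then obtain e where e: "\<And>i. i \<in> K \<Longrightarrow> \<rho> i = z ^ e i" by metis
  have sumI: "(\<Sum>i\<in>I. c i * z ^ e i) = (\<Sum>i\<in>I. c i * x i) / x i0" if "I \<subseteq> K" for I
  proof -
    have "(\<Sum>i\<in>I. c i * z ^ e i) = (\<Sum>i\<in>I. c i * x i / x i0)"
    proof (intro sum.cong refl)
      fix i assume "i \<in> I"
      hence "z ^ e i = x i / x i0" using that e unfolding \<rho>_def by auto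
      thus "c i * z ^ e i = c i * x i / x i0" by simp
    qed
    also have "\<dots> = (\<Sum>i\<in>I. c i * x i) / x i0" by (simp add: sum_divide_distrib)
    finally show ?thesis .
  qed
  have van': "(\<Sum>i\<in>K. c i * z ^ e i) = 0" using sumI[of K] van by simp
  have minl': "I = K" if "I \<subseteq> K" "I \<noteq> {}" "(\<Sum>i\<in>I. c i * z ^ e i) = 0" for I
  proof -
    have "(\<Sum>i\<in>I. c i * x i) = 0" using sumI[OF that(1)] that(3) xnz[OF i0] by simp
    thus ?thesis using minl that(1,2) by blast
  qed
  have least': "\<not> (\<forall>i\<in>K. (z ^ e i) ^ n = 1)" if "0 < n" "n < m" for n
    using least[OF that] e by auto
  have "z ^ e i0 = 1" using e[OF i0] xnz[OF i0] unfolding \<rho>_def by simp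
  hence e0: "m dvd e i0" using pr unfolding prim_def by blast
  have primes: "p \<le> card K \<and> \<not> p^2 dvd m" if "prime p" "p dvd m" for p
    by (rule mann_prime[OF fin i0 rat pr van' minl' least' e0 that])
  have "m dvd (\<Prod>p\<in>{p. prime p \<and> p \<le> card K}. p)"
    by (rule sqfree_dvd_primorial[OF m0 primes])
  then obtain t where t: "(\<Prod>p\<in>{p. prime p \<and> p \<le> card K}. p) = m * t" by (elim dvdE)
  have "\<rho> i1 ^ m = 1" using Pm i1 by blast
  thus ?thesis unfolding t \<rho>_def by (simp add: power_mult)
qed

lemma min_zero_subset:
  fixes K :: "'i set" and f :: "'i \<Rightarrow> complex"
  assumes fin: "finite K" and i: "i \<in> K" and z: "sum f K = 0"
  obtains S where "S \<subseteq> K" "i \<in> S" "sum f S = 0"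
    "\<And>I. I \<subseteq> S \<Longrightarrow> I \<noteq> {} \<Longrightarrow> sum f I = 0 \<Longrightarrow> I = S"
proof -
  define P where "P S \<longleftrightarrow> S \<subseteq> K \<and> i \<in> S \<and> sum f S = 0" for S
  have PK: "P K" using i z unfolding P_def by auto
  define n where "n = (LEAST n. \<exists>S. P S \<and> card S = n)"
  have "\<exists>S. P S \<and> card S = n" unfolding n_def
    by (rule LeastI[of _ "card K"]) (use PK in blast)
  then obtain S where S: "P S" "card S = n" by blast
  have nmin: "n \<le> card S'" if "P S'" for S' unfolding n_def using that by (intro Least_le) blast
  have finS: "finite S" using S(1) fin unfolding P_def by (auto intro: finite_subset)
  have "I = S" if I: "I \<subseteq> S" "I \<noteq> {}" "sum f I = 0" for I
  proof (rule ccontr)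
    assume ne: "I \<noteq> S"
    have finI: "finite I" using I(1) finS by (rule finite_subset)
    have sd: "sum f (S - I) = 0" using sum.subset_diff[OF I(1) finS, of f] S(1) I(3)
      unfolding P_def by simp
    show False
    proof (cases "i \<in> I")
      case True
      hence "P I" using I S(1) unfolding P_def by auto
      moreover have "card I < card S" using I(1) ne finS by (meson psubsetI psubset_card_mono)
      ultimately show False using nmin S(2) by fastforce
    next
      case False
      hence "P (S - I)" using S(1) sd unfolding P_def by auto
      moreover have "card (S - I) < card S" using I(1,2) finS
        by (metis Diff_subset card_seteq Diff_eq_empty_iff double_diff order_refl psubsetI psubset_card_mono finite_Diff)
      ultimately show False using nmin S(2) by fastforce
    qed
  qed
  thus ?thesis using that S(1) unfolding P_def by blast
qed


lemma pair_root:
  assumes zs: "zs \<in> Z_set a k" and ys: "ys \<in> Z_set a k" and i: "i < k"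
  shows "\<exists>j<k. (zs ! i / ys ! j) ^ primorial_2k k = 1"
proof -
  from zs obtain c where rz: "\<forall>i<k. root_of_unity (zs!i)" and
     cr: "\<forall>i<k. c i \<in> \<rat>" and cs: "(\<Sum>i<k. c i * zs!i) = a" and
     cI: "\<forall>I. I \<subseteq> {..<k} \<and> I \<noteq> {} \<longrightarrow> (\<Sum>i\<in>I. c i * zs!i) \<noteq> 0"
     unfolding Z_set_def by blast
  from ys obtain b where ry: "\<forall>i<k. root_of_unity (ys!i)" and
     br: "\<forall>i<k. b i \<in> \<rat>" and bs: "(\<Sum>i<k. b i * ys!i) = a"
     unfolding Z_set_def by blast
  define K0 where "K0 = {..<k} <+> {..<k}"
  define x where "x = case_sum (\<lambda>i. zs!i) (\<lambda>j. ys!j)"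
  define d where "d = case_sum c (\<lambda>j. - b j)"
  define f where "f n = d n * x n" for n
  have finK0: "finite K0" unfolding K0_def by simp
  have "sum f K0 = (\<Sum>i<k. c i * zs!i) + (\<Sum>j<k. - (b j * ys!j))"
    unfolding K0_def by (subst sum.Plus) (auto simp: f_def d_def x_def o_def)
  also have "\<dots> = 0" using cs bs by (simp add: sum_negf)
  finally have f0: "sum f K0 = 0" .
  have iK: "Inl i \<in> K0" using i unfolding K0_def by auto
  obtain S where S: "S \<subseteq> K0" "Inl i \<in> S" "sum f S = 0"
    and Smin: "\<And>I. I \<subseteq> S \<Longrightarrow> I \<noteq> {} \<Longrightarrow> sum f I = 0 \<Longrightarrow> I = S"
    using min_zero_subset[OF finK0 iK f0] by blast
  have finS: "finite S" using S(1) finK0 by (rule finite_subset)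
  have "\<exists>j. Inr j \<in> S"
  proof (rule ccontr)
    assume "\<nexists>j. Inr j \<in> S"
    define I' where "I' = {i'. Inl i' \<in> S}"
    have SI: "S = Inl ` I'" unfolding I'_def using \<open>\<nexists>j. Inr j \<in> S\<close>
      by (auto intro: sum.exhaust)
    have I'k: "I' \<subseteq> {..<k}" using S(1) unfolding I'_def K0_def by auto
    have I'ne: "I' \<noteq> {}" using S(2) unfolding I'_def by auto
    have "sum f S = (\<Sum>i\<in>I'. c i * zs!i)" unfolding SI
      by (subst sum.reindex) (auto simp: inj_on_def f_def d_def x_def)
    thus False using cI I'k I'ne S(3) by auto
  qed
  then obtain j where j: "Inr j \<in> S" by blast
  have jk: "j < k" using j S(1) unfolding K0_def by auto
  have rat: "\<forall>n\<in>S. d n \<in> \<rat>"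
  proof
    fix n assume "n \<in> S"
    hence "n \<in> K0" using S(1) by auto
    thus "d n \<in> \<rat>" unfolding K0_def d_def using cr br by (auto)
  qed
  have ru: "\<forall>n\<in>S. root_of_unity (x n)"
  proof
    fix n assume "n \<in> S"
    hence "n \<in> K0" using S(1) by auto
    thus "root_of_unity (x n)" unfolding K0_def x_def using rz ry by auto
  qed
  have van: "(\<Sum>n\<in>S. d n * x n) = 0" using S(3) unfolding f_def .
  have minl: "I = S" if "I \<subseteq> S" "I \<noteq> {}" "(\<Sum>n\<in>I. d n * x n) = 0" for I
    using Smin[OF that(1,2)] that(3) unfolding f_def by blast
  have M: "(x (Inl i) / x (Inr j)) ^ (\<Prod>p\<in>{p. prime p \<and> p \<le> card S}. p) = 1"
    by (rule mann[OF finS j S(2) rat ru van minl])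
  have "card S \<le> card K0" using card_mono[OF finK0 S(1)] .
  also have "card K0 = 2 * k" unfolding K0_def by (simp add: card_Plus)
  finally have cS: "card S \<le> 2 * k" .
  have "(\<Prod>p\<in>{p. prime p \<and> p \<le> card S}. p) dvd primorial_2k k"
    unfolding primorial_2k_def using cS by (intro prod_dvd_prod_subset) auto
  then obtain t where t: "primorial_2k k = (\<Prod>p\<in>{p. prime p \<and> p \<le> card S}. p) * t" by (elim dvdE)
  have "(zs ! i / ys ! j) ^ primorial_2k k = 1" using M unfolding t x_def by (simp add: power_mult)
  thus ?thesis using jk by blast
qed


theorem corollary7:
  fixes k :: nat and a :: complex
  assumes "k \<ge> 1" and "a \<noteq> 0"
  shows "finite (Z_set a k) \<and> card (Z_set a k) \<le> (k * primorial_2k k) ^ k"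
proof (cases "Z_set a k = {}")
  case True thus ?thesis by simp
next
  case False
  then obtain ys where ys: "ys \<in> Z_set a k" by blast
  define C where "C = primorial_2k k"
  have C0: "C > 0" unfolding C_def primorial_2k_def by (intro prod_pos) (auto simp: prime_gt_0_nat)
  define R where "R = {w::complex. w ^ C = 1}"
  have finR: "finite R" unfolding R_def using C0 by (intro finite_roots_unity) simp
  have cardR: "card R = C" unfolding R_def using card_roots_unity_eq[OF C0] .
  define T where "T = (\<lambda>(j, w). ys ! j * w) ` ({..<k} \<times> R)"
  have finT: "finite T" unfolding T_def using finR by simp
  have "card T \<le> card ({..<k} \<times> R)" unfolding T_def using finR by (intro card_image_le) simp
  also have "\<dots> = k * C" using cardR by (simp add: card_cartesian_product)
  finally have cardT: "card T \<le> k * C" .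
  have sub: "Z_set a k \<subseteq> {xs. set xs \<subseteq> T \<and> length xs = k}"
  proof
    fix zs assume zs: "zs \<in> Z_set a k"
    have len: "length zs = k" using zs unfolding Z_set_def by blast
    have "set zs \<subseteq> T"
    proof
      fix v assume "v \<in> set zs"
      then obtain i where i: "i < k" "v = zs ! i" using len by (auto simp: in_set_conv_nth)
      obtain j where j: "j < k" "(zs ! i / ys ! j) ^ C = 1"
        using pair_root[OF zs ys i(1)] unfolding C_def by blast
      have "root_of_unity (ys ! j)" using ys j(1) unfolding Z_set_def by blast
      then obtain n where n: "n > 0" "(ys ! j) ^ n = 1" unfolding root_of_unity_def by blast
      have "ys ! j \<noteq> 0" using n by (cases "ys ! j = 0") (auto simp: power_0_left)
      hence "v = ys ! j * (zs ! i / ys ! j)" using i by simp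
      moreover have "(j, zs ! i / ys ! j) \<in> {..<k} \<times> R" using j unfolding R_def by simp
      ultimately show "v \<in> T" unfolding T_def by (auto intro!: image_eqI[of _ _ "(j, zs ! i / ys ! j)"])
    qed
    thus "zs \<in> {xs. set xs \<subseteq> T \<and> length xs = k}" using len by blast
  qed
  have finL: "finite {xs. set xs \<subseteq> T \<and> length xs = k}" by (rule finite_lists_length_eq[OF finT])
  have "card (Z_set a k) \<le> card {xs. set xs \<subseteq> T \<and> length xs = k}" by (rule card_mono[OF finL sub])
  also have "\<dots> = card T ^ k" by (rule card_lists_length_eq[OF finT])
  also have "\<dots> \<le> (k * C) ^ k" by (rule power_mono[OF cardT]) simp
  finally show ?thesis using finite_subset[OF sub finL] unfolding C_def by blast
qed

end
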